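(* Let $k$ be an algebraically closed field of characteristic zero. Let $A$ be an integral normal $k$-algebra of finite type endowed with a locally nilpotent $k$-derivation $\partial$, let $F_n=\ker\partial^{n+1}$ ($n\geq0$), $F_{-1}=\{0\}$, and let $R(A,\partial)=\bigoplus_{n\geq0}F_n$ be its Rees algebra. The following are equivalent: (1) $R(A,\partial)$ is finitely generated over $k$; (2) the associated graded algebra $\mathrm{gr}_\partial A=\bigoplus_{n\geq0}F_n/F_{n-1}$ is finitely generated over $k$; (3) the $k$-algebra $A_0=F_0=\ker\partial$ is finitely generated and $R(A,\partial)_+=\bigoplus_{n>0}F_n$ is a finitely generated $R(A,\partial)$-module.
   Context: $R(A,\partial)$ and $\mathrm{gr}_\partial A$ carry the multiplication induced by that of $A$ (note $F_mF_n\subseteq F_{m+n}$). Equivalently $R(A,\partial)$ is the graded subalgebra $\bigoplus_n F_n\upsilon^n$ of $A[\upsilon]$. *)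

theory Defs
  imports "HOL-Computational_Algebra.Polynomial" "HOL-Computational_Algebra.Fraction_Field"
begin

text \<open>The ground field k is represented as a subfield K of the (integral) k-algebra A,
  which is the whole of the type 'a (an integral domain).\<close>

definition subfield :: "'a::comm_ring_1 set \<Rightarrow> bool" where
  "subfield K \<longleftrightarrow> 0 \<in> K \<and> 1 \<in> K \<and> (\<forall>x\<in>K. \<forall>y\<in>K. x + y \<in> K \<and> x * y \<in> K) \<and>
     (\<forall>x\<in>K. - x \<in> K) \<and> (\<forall>x\<in>K. x \<noteq> 0 \<longrightarrow> (\<exists>y\<in>K. x * y = 1))"

definition alg_closed_sub :: "'a::comm_ring_1 set \<Rightarrow> bool" where
  "alg_closed_sub K \<longleftrightarrow> (\<forall>p::'a poly. (\<forall>i. coeff p i \<in> K) \<and> degree p \<ge> 1 \<longrightarrow>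
      (\<exists>x\<in>K. poly p x = 0))"

definition char_zero_ring :: "'a::comm_ring_1 itself \<Rightarrow> bool" where
  "char_zero_ring _ \<longleftrightarrow> (\<forall>n::nat. n > 0 \<longrightarrow> (of_nat n :: 'a) \<noteq> 0)"

inductive_set alg_gen :: "'b::comm_ring_1 set \<Rightarrow> 'b set \<Rightarrow> 'b set" for K S where
  scal: "c \<in> K \<Longrightarrow> c \<in> alg_gen K S"
| gen: "s \<in> S \<Longrightarrow> s \<in> alg_gen K S"
| add: "x \<in> alg_gen K S \<Longrightarrow> y \<in> alg_gen K S \<Longrightarrow> x + y \<in> alg_gen K S"
| mult: "x \<in> alg_gen K S \<Longrightarrow> y \<in> alg_gen K S \<Longrightarrow> x * y \<in> alg_gen K S"

definition fin_gen_alg :: "'b::comm_ring_1 set \<Rightarrow> 'b set \<Rightarrow> bool" where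
  "fin_gen_alg K B \<longleftrightarrow> (\<exists>S. finite S \<and> S \<subseteq> B \<and> alg_gen K S = B)"

text \<open>The quotient algebra B/N (N an ideal of B) is finitely generated over K:
  the images of finitely many elements of B generate B/N, i.e. every element of B
  is congruent mod N to an element of the subalgebra generated by them.\<close>
definition fin_gen_alg_mod :: "'b::comm_ring_1 set \<Rightarrow> 'b set \<Rightarrow> 'b set \<Rightarrow> bool" where
  "fin_gen_alg_mod K B N \<longleftrightarrow>
     (\<exists>S. finite S \<and> S \<subseteq> B \<and> (\<forall>b\<in>B. \<exists>g\<in>alg_gen K S. b - g \<in> N))"

definition fin_gen_module :: "'b::comm_ring_1 set \<Rightarrow> 'b set \<Rightarrow> bool" where
  "fin_gen_module B M \<longleftrightarrow> (\<exists>T. finite T \<and> T \<subseteq> M \<and>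
     M = {\<Sum>t\<in>T. r t * t | r. \<forall>t\<in>T. r t \<in> B})"

definition finite_type_alg :: "'a::comm_ring_1 set \<Rightarrow> bool" where
  "finite_type_alg K \<longleftrightarrow> fin_gen_alg K (UNIV :: 'a set)"

definition normal_domain :: "'a::idom itself \<Rightarrow> bool" where
  "normal_domain _ \<longleftrightarrow> (\<forall>x :: 'a fract. (\<exists>p :: 'a poly. lead_coeff p = 1 \<and>
      poly (map_poly (\<lambda>a. Fract a 1) p) x = 0) \<longrightarrow> (\<exists>a::'a. x = Fract a 1))"

definition k_derivation :: "'a::comm_ring_1 set \<Rightarrow> ('a \<Rightarrow> 'a) \<Rightarrow> bool" where
  "k_derivation K D \<longleftrightarrow> (\<forall>a b. D (a + b) = D a + D b) \<and>
     (\<forall>a b. D (a * b) = a * D b + b * D a) \<and> (\<forall>c\<in>K. \<forall>a. D (c * a) = c * D a)"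

definition locally_nilpotent :: "('a::zero \<Rightarrow> 'a) \<Rightarrow> bool" where
  "locally_nilpotent D \<longleftrightarrow> (\<forall>a. \<exists>n. (D ^^ n) a = 0)"

definition filt :: "('a::zero \<Rightarrow> 'a) \<Rightarrow> nat \<Rightarrow> 'a set" where
  "filt D n = {a. (D ^^ Suc n) a = 0}"

definition filt_prev :: "('a::zero \<Rightarrow> 'a) \<Rightarrow> nat \<Rightarrow> 'a set" where
  "filt_prev D n = (if n = 0 then {0} else filt D (n - 1))"

text \<open>Rees algebra R(A,D) = sum of F_n v^n inside A[v].\<close>
definition rees :: "('a::comm_ring_1 \<Rightarrow> 'a) \<Rightarrow> 'a poly set" where
  "rees D = {p. \<forall>n. coeff p n \<in> filt D n}"

text \<open>The ideal sum of F_(n-1) v^n of R(A,D); gr_D A = R(A,D) modulo it, i.e.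
  the direct sum of F_n/F_(n-1) with the induced multiplication.\<close>
definition gr_ideal :: "('a::comm_ring_1 \<Rightarrow> 'a) \<Rightarrow> 'a poly set" where
  "gr_ideal D = {p. \<forall>n. coeff p n \<in> filt_prev D n}"

definition rees_plus :: "('a::comm_ring_1 \<Rightarrow> 'a) \<Rightarrow> 'a poly set" where
  "rees_plus D = {p \<in> rees D. coeff p 0 = 0}"

definition const_polys :: "'a::zero set \<Rightarrow> 'a poly set" where
  "const_polys K = (\<lambda>c. [:c:]) ` K"

end

theory Submission
  imports Defs
begin

lemma alg_gen_sum:
  assumes "0 \<in> alg_gen K S" "finite I" "\<And>i. i \<in> I \<Longrightarrow> f i \<in> alg_gen K S"
  shows "sum f I \<in> alg_gen K S"
  using assms(2,3) by (induction I rule: finite_induct) (auto simp: assms(1) intro: alg_gen.add)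

lemma alg_gen_subset:
  assumes "K \<subseteq> B" "S \<subseteq> B" "\<And>x y. x \<in> B \<Longrightarrow> y \<in> B \<Longrightarrow> x + y \<in> B"
    "\<And>x y. x \<in> B \<Longrightarrow> y \<in> B \<Longrightarrow> x * y \<in> B"
  shows "alg_gen K S \<subseteq> B"
proof
  fix x assume "x \<in> alg_gen K S" then show "x \<in> B"
    by (induction rule: alg_gen.induct) (use assms in auto)
qed

lemma alg_gen_mono_gen:
  assumes "S \<subseteq> alg_gen K T"
  shows "alg_gen K S \<subseteq> alg_gen K T"
proof
  fix x assume "x \<in> alg_gen K S" then show "x \<in> alg_gen K T"
    by (induction rule: alg_gen.induct) (use assms in \<open>auto intro: alg_gen.intros\<close>)
qed

definition hcomp :: "nat \<Rightarrow> 'a::zero poly \<Rightarrow> 'a poly" where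
  "hcomp n p = monom (coeff p n) n"

lemma hcomp_mult:
  "hcomp n (p * q) = (\<Sum>i\<le>n. hcomp i p * hcomp (n - i) (q::'a::comm_ring_1 poly))"
  unfolding hcomp_def coeff_mult monom_sum by (simp add: mult_monom)

lemma hcomp_add: "hcomp n (p + q) = hcomp n p + hcomp n (q::'a::comm_ring_1 poly)"
  unfolding hcomp_def by (simp add: add_monom)

lemma hcomp_diff: "hcomp n (p - q) = hcomp n p - hcomp n (q::'a::comm_ring_1 poly)"
  unfolding hcomp_def by (simp add: diff_monom)

lemma hcomp_sum: "hcomp n (sum f I) = (\<Sum>i\<in>I. hcomp n (f i))"
  unfolding hcomp_def by (simp add: coeff_sum monom_sum)

lemma hcomp_sum_eq: "p = (\<Sum>i\<le>degree p. hcomp i p)"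
  unfolding hcomp_def by (simp add: poly_as_sum_of_monoms)

lemma hcomp_monom: "hcomp n (monom a m) = (if n = m then monom a m else 0)"
  unfolding hcomp_def by (auto simp: coeff_monom)

lemma zero_alg_gen: "(0::'a::comm_ring_1) \<in> K \<Longrightarrow> (0::'a poly) \<in> alg_gen (const_polys K) S"
  by (metis alg_gen.scal const_polys_def image_eqI pCons_0_0)

lemma alg_gen_hcomp:
  fixes K :: "'a::comm_ring_1 set"
  assumes K0: "0 \<in> K" and hom: "\<forall>s\<in>S. \<exists>a m. s = monom a m"
  and "x \<in> alg_gen (const_polys K) S"
  shows "hcomp n x \<in> alg_gen (const_polys K) S"
  using assms(3)
proof (induction arbitrary: n rule: alg_gen.induct)
  case (scal c)
  then obtain a where "c = [:a:]" "a \<in> K" unfolding const_polys_def by auto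
  then show ?case using zero_alg_gen[OF K0] scal
    by (auto simp: hcomp_monom monom_0[symmetric] intro: alg_gen.scal)
next
  case (gen s)
  then obtain a m where "s = monom a m" using hom by auto
  then show ?case using zero_alg_gen[OF K0] gen
    by (auto simp: hcomp_monom intro: alg_gen.gen)
next
  case (add x y)
  then show ?case by (simp add: hcomp_add alg_gen.add)
next
  case (mult x y)
  show ?case unfolding hcomp_mult
    by (rule alg_gen_sum[OF zero_alg_gen[OF K0]]) (auto intro: alg_gen.mult mult.IH)
qed

definition hcomps :: "'a::zero poly set \<Rightarrow> 'a poly set" where
  "hcomps S = (\<lambda>(s,n). hcomp n s) ` (SIGMA s:S. {..degree s})"

lemma finite_hcomps: "finite S \<Longrightarrow> finite (hcomps S)"
  unfolding hcomps_def by auto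

lemma hcomps_hom: "s \<in> hcomps S \<Longrightarrow> \<exists>a m. s = monom a m"
  unfolding hcomps_def hcomp_def by auto

lemma S_sub_hcomps:
  fixes K :: "'a::comm_ring_1 set"
  assumes K0: "0 \<in> K" and "hcomps S \<subseteq> G"
  shows "S \<subseteq> alg_gen (const_polys K) G"
proof
  fix s assume s: "s \<in> S"
  have "(\<Sum>i\<le>degree s. hcomp i s) \<in> alg_gen (const_polys K) G"
    apply (rule alg_gen_sum[OF zero_alg_gen[OF K0]])
    using s assms(2) by (auto simp: hcomps_def intro!: alg_gen.gen)
  then show "s \<in> alg_gen (const_polys K) G" using hcomp_sum_eq by metis
qed


context
  fixes K :: "'a::comm_ring_1 set" and D :: "'a \<Rightarrow> 'a"
  assumes der: "k_derivation K D"
begin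

lemma D_add: "D (a + b) = D a + D b"
  using der unfolding k_derivation_def by auto

lemma D_mult: "D (a * b) = a * D b + b * D a"
  using der unfolding k_derivation_def by auto

lemma D_0: "D 0 = 0"
  using D_add[of 0 0] by simp

lemma D_1: "D 1 = 0"
  using D_mult[of 1 1] by simp

lemma D_K: "c \<in> K \<Longrightarrow> D c = 0"
  using der D_1 unfolding k_derivation_def by (metis mult.right_neutral mult_zero_right)

lemma D_uminus: "D (- a) = - D a"
  using D_add[of a "-a"] D_0 by (simp add: eq_neg_iff_add_eq_0 add.commute)

lemma Dn_add: "(D ^^ n) (a + b) = (D ^^ n) a + (D ^^ n) b"
  by (induction n) (auto simp: D_add)

lemma Dn_0: "(D ^^ n) 0 = 0"
  by (induction n) (auto simp: D_0)

lemma Dn_uminus: "(D ^^ n) (- a) = - (D ^^ n) a"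
  by (induction n) (auto simp: D_uminus)

lemma Dn_diff: "(D ^^ n) (a - b) = (D ^^ n) a - (D ^^ n) b"
  using Dn_add[of n a "-b"] Dn_uminus[of n b] by simp

lemma filt_0: "0 \<in> filt D n"
  unfolding filt_def by (simp add: Dn_0 del: funpow.simps)

lemma filt_add: "a \<in> filt D n \<Longrightarrow> b \<in> filt D n \<Longrightarrow> a + b \<in> filt D n"
  unfolding filt_def by (simp add: Dn_add del: funpow.simps)

lemma filt_diff: "a \<in> filt D n \<Longrightarrow> b \<in> filt D n \<Longrightarrow> a - b \<in> filt D n"
  unfolding filt_def by (simp add: Dn_diff del: funpow.simps)

lemma filt_sum: "finite I \<Longrightarrow> (\<And>i. i \<in> I \<Longrightarrow> f i \<in> filt D n) \<Longrightarrow> sum f I \<in> filt D n"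
  by (induction I rule: finite_induct) (auto simp: filt_0 filt_add)

lemma filt_mono: "a \<in> filt D m \<Longrightarrow> m \<le> n \<Longrightarrow> a \<in> filt D n"
proof (induction n)
  case 0 then show ?case by simp
next
  case (Suc n)
  show ?case
  proof (cases "m = Suc n")
    case False
    then have "a \<in> filt D n" using Suc by auto
    then show ?thesis unfolding filt_def by (simp add: D_0)
  qed (use Suc in auto)
qed

lemma filt_K: "c \<in> K \<Longrightarrow> c \<in> filt D 0"
  unfolding filt_def by (simp add: D_K)

lemma filt_1: "1 \<in> filt D n"
  using filt_mono[of 1 0 n] unfolding filt_def by (simp add: D_1)

lemma filt_mult_aux:
  "\<forall>m n a b. m + n = s \<longrightarrow> (D ^^ Suc m) a = 0 \<longrightarrow> (D ^^ Suc n) b = 0 \<longrightarrow>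
     (D ^^ Suc s) (a * b) = 0"
proof (induction s)
  case 0
  then show ?case by (auto simp: D_mult)
next
  case (Suc s)
  have key: "(D ^^ Suc s) (a * D b) = 0"
    if "m + n = Suc s" "(D ^^ Suc m) a = 0" "(D ^^ Suc n) b = 0" for m n a b
  proof (cases n)
    case 0
    then show ?thesis using that by (simp add: Dn_0 D_0)
  next
    case (Suc n')
    have "(D ^^ Suc n') (D b) = 0" using that Suc by (simp add: funpow_Suc_right del: funpow.simps)
    then show ?thesis using Suc.IH that Suc by auto
  qed
  show ?case
  proof (intro allI impI)
    fix m n a b assume h: "m + n = Suc s" "(D ^^ Suc m) a = 0" "(D ^^ Suc n) b = 0"
    have "(D ^^ Suc (Suc s)) (a * b) = (D ^^ Suc s) (a * D b) + (D ^^ Suc s) (b * D a)"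
      by (simp only: funpow_Suc_right[of "Suc s"] o_apply D_mult Dn_add[of "Suc s"])
    also have "\<dots> = 0" using key[OF h] key[of n m b a] h by (simp add: add.commute)
    finally show "(D ^^ Suc (Suc s)) (a * b) = 0" .
  qed
qed

lemma filt_mult: "a \<in> filt D m \<Longrightarrow> b \<in> filt D n \<Longrightarrow> a * b \<in> filt D (m + n)"
  unfolding filt_def using filt_mult_aux by blast

lemma rees_add: "p \<in> rees D \<Longrightarrow> q \<in> rees D \<Longrightarrow> p + q \<in> rees D"
  unfolding rees_def by (auto intro: filt_add)

lemma rees_diff: "p \<in> rees D \<Longrightarrow> q \<in> rees D \<Longrightarrow> p - q \<in> rees D"
  unfolding rees_def by (auto intro: filt_diff)

lemma rees_mult:
  assumes "p \<in> rees D" "q \<in> rees D" shows "p * q \<in> rees D"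
  unfolding rees_def mem_Collect_eq coeff_mult
proof (intro allI filt_sum)
  fix n and i :: nat assume "i \<in> {..n}"
  then show "coeff p i * coeff q (n - i) \<in> filt D n"
    using filt_mult[of "coeff p i" i "coeff q (n-i)" "n - i"] assms unfolding rees_def by auto
qed auto

lemma rees_0: "0 \<in> rees D"
  unfolding rees_def by (simp add: filt_0)

lemma rees_sum: "finite I \<Longrightarrow> (\<And>i. i \<in> I \<Longrightarrow> f i \<in> rees D) \<Longrightarrow> sum f I \<in> rees D"
  by (induction I rule: finite_induct) (auto simp: rees_0 rees_add)

lemma monom_rees: "monom a n \<in> rees D \<longleftrightarrow> a \<in> filt D n"
  unfolding rees_def by (auto simp: coeff_monom filt_0 split: if_splits)

lemma hcomp_rees: "p \<in> rees D \<Longrightarrow> hcomp n p \<in> rees D"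
  unfolding hcomp_def monom_rees by (simp add: rees_def)

lemma const_rees: "c \<in> filt D 0 \<Longrightarrow> [:c:] \<in> rees D"
  using monom_rees[of c 0] by (simp add: monom_0)

lemma const_polys_rees: "const_polys K \<subseteq> rees D"
  unfolding const_polys_def using const_rees filt_K by auto

lemma v_rees: "monom 1 1 \<in> rees D"
  by (simp add: monom_rees filt_1)

lemma alg_gen_rees: "S \<subseteq> rees D \<Longrightarrow> alg_gen (const_polys K) S \<subseteq> rees D"
  by (rule alg_gen_subset) (auto simp: const_polys_rees rees_add rees_mult)

lemma gr_ideal_0: "0 \<in> gr_ideal D"
  unfolding gr_ideal_def filt_prev_def by (simp add: filt_0)

end


lemma l12:
  assumes der: "k_derivation K D" and "fin_gen_alg (const_polys K) (rees D)"
  shows "fin_gen_alg_mod (const_polys K) (rees D) (gr_ideal D)"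
  using assms(2) gr_ideal_0[OF der] unfolding fin_gen_alg_def fin_gen_alg_mod_def by force

lemma l21:
  fixes K :: "'a::comm_ring_1 set"
  assumes der: "k_derivation K D" and K0: "0 \<in> K"
    and h: "fin_gen_alg_mod (const_polys K) (rees D) (gr_ideal D)"
  shows "fin_gen_alg (const_polys K) (rees D)"
proof -
  obtain S where S: "finite S" "S \<subseteq> rees D" "\<forall>b\<in>rees D. \<exists>g\<in>alg_gen (const_polys K) S. b - g \<in> gr_ideal D"
    using h unfolding fin_gen_alg_mod_def by blast
  define G where "G = insert (monom 1 1) (hcomps S)"
  have Gfin: "finite G" using S(1) finite_hcomps G_def by auto
  have GR: "G \<subseteq> rees D" using S(2) v_rees[OF der] hcomp_rees[OF der] unfolding G_def hcomps_def by auto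
  have Ghom: "\<forall>s\<in>G. \<exists>a m. s = monom a m" unfolding G_def using hcomps_hom by blast
  have SG: "alg_gen (const_polys K) S \<subseteq> alg_gen (const_polys K) G"
    by (rule alg_gen_mono_gen, rule S_sub_hcomps[OF K0]) (auto simp: G_def)
  have hom: "\<forall>a. monom a n \<in> rees D \<longrightarrow> monom a n \<in> alg_gen (const_polys K) G" for n
  proof (induction n)
    case 0
    show ?case
    proof (intro allI impI)
      fix a assume a: "monom a 0 \<in> rees D"
      then obtain g where g: "g \<in> alg_gen (const_polys K) S" "monom a 0 - g \<in> gr_ideal D" using S(3) by blast
      have "coeff (monom a 0 - g) 0 \<in> filt_prev D 0" using g(2) unfolding gr_ideal_def by blast
      then have "a = coeff g 0" by (simp add: filt_prev_def)
      then have "monom a 0 = hcomp 0 g" by (simp add: hcomp_def)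
      then show "monom a 0 \<in> alg_gen (const_polys K) G"
        using alg_gen_hcomp[OF K0 Ghom] g(1) SG by auto
    qed
  next
    case (Suc m)
    show ?case
    proof (intro allI impI)
      fix a assume a: "monom a (Suc m) \<in> rees D"
      then obtain g where g: "g \<in> alg_gen (const_polys K) S" "monom a (Suc m) - g \<in> gr_ideal D" using S(3) by blast
      define e where "e = a - coeff g (Suc m)"
      have "coeff (monom a (Suc m) - g) (Suc m) \<in> filt_prev D (Suc m)" using g(2) unfolding gr_ideal_def by blast
      then have "e \<in> filt D m" by (simp add: filt_prev_def e_def)
      then have "monom e m \<in> rees D" using monom_rees[OF der] by auto
      then have e1: "monom e m \<in> alg_gen (const_polys K) G" using Suc.IH by auto
      have e2: "hcomp (Suc m) g \<in> alg_gen (const_polys K) G" using alg_gen_hcomp[OF K0 Ghom] g(1) SG by auto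
      have e3: "monom 1 1 \<in> alg_gen (const_polys K) G" by (auto simp: G_def intro: alg_gen.gen)
      have "monom a (Suc m) = hcomp (Suc m) g + monom 1 1 * monom e m"
        by (simp add: hcomp_def mult_monom add_monom e_def)
      then show "monom a (Suc m) \<in> alg_gen (const_polys K) G"
        using e1 e2 e3 by (auto intro: alg_gen.add alg_gen.mult)
    qed
  qed
  have "rees D \<subseteq> alg_gen (const_polys K) G"
  proof
    fix b assume b: "b \<in> rees D"
    have "(\<Sum>i\<le>degree b. hcomp i b) \<in> alg_gen (const_polys K) G"
      by (rule alg_gen_sum[OF zero_alg_gen[OF K0]]) (use hom hcomp_rees[OF der b] in \<open>auto simp: hcomp_def\<close>)
    then show "b \<in> alg_gen (const_polys K) G" using hcomp_sum_eq by metis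
  qed
  moreover have "alg_gen (const_polys K) G \<subseteq> rees D" using alg_gen_rees[OF der GR] .
  ultimately show ?thesis unfolding fin_gen_alg_def using Gfin GR by blast
qed

lemma l13a:
  fixes K :: "'a::comm_ring_1 set"
  assumes der: "k_derivation K D" and K0: "0 \<in> K"
    and h: "fin_gen_alg (const_polys K) (rees D)"
  shows "fin_gen_alg K (filt D 0)"
proof -
  obtain S where S: "finite S" "S \<subseteq> rees D" "alg_gen (const_polys K) S = rees D"
    using h unfolding fin_gen_alg_def by blast
  define S0 where "S0 = (\<lambda>s. coeff s 0) ` S"
  have S0F: "S0 \<subseteq> filt D 0" using S(2) unfolding S0_def rees_def by auto
  have "alg_gen K S0 \<subseteq> filt D 0"
    by (rule alg_gen_subset) (use S0F filt_K[OF der] filt_add[OF der] filt_mult[OF der, of _ 0 _ 0] in auto)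
  moreover have co: "coeff x 0 \<in> alg_gen K S0" if "x \<in> alg_gen (const_polys K) S" for x
    using that
    by (induction rule: alg_gen.induct) (auto simp: const_polys_def S0_def coeff_mult_0 intro: alg_gen.intros)
  have "filt D 0 \<subseteq> alg_gen K S0"
  proof
    fix c assume "c \<in> filt D 0"
    then have "[:c:] \<in> alg_gen (const_polys K) S" using const_rees[OF der] S(3) by auto
    then show "c \<in> alg_gen K S0" using co by fastforce
  qed
  ultimately show ?thesis using S(1) S0F unfolding fin_gen_alg_def S0_def by blast
qed

lemma l13b:
  fixes K :: "'a::comm_ring_1 set"
  assumes der: "k_derivation K D" and K0: "0 \<in> K"
    and h: "fin_gen_alg (const_polys K) (rees D)"
  shows "fin_gen_module (rees D) (rees_plus D)"
proof -
  obtain S where S: "finite S" "S \<subseteq> rees D" "alg_gen (const_polys K) S = rees D"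
    using h unfolding fin_gen_alg_def by blast
  define G where "G = hcomps S"
  have GR: "G \<subseteq> rees D" using S(2) hcomp_rees[OF der] unfolding G_def hcomps_def by auto
  have Ghom: "\<forall>s\<in>G. \<exists>a m. s = monom a m" unfolding G_def using hcomps_hom by blast
  have RG: "rees D \<subseteq> alg_gen (const_polys K) G"
    using alg_gen_mono_gen[OF S_sub_hcomps[OF K0, of S G]] S(3) G_def by auto
  have AR: "alg_gen (const_polys K) G \<subseteq> rees D" using alg_gen_rees[OF der GR] .
  define T where "T = {s \<in> G. coeff s 0 = 0}"
  define M where "M = {\<Sum>t\<in>T. r t * t | r. \<forall>t\<in>T. r t \<in> rees D}"
  have Tfin: "finite T" using finite_hcomps[OF S(1)] unfolding T_def G_def by auto
  have M0: "0 \<in> M" unfolding M_def using rees_0[OF der] by (auto intro!: exI[of _ "\<lambda>_. 0"])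
  have Madd: "x + y \<in> M" if hx: "x \<in> M" and hy: "y \<in> M" for x y
  proof -
    obtain r1 where r1: "\<forall>t\<in>T. r1 t \<in> rees D" "x = (\<Sum>t\<in>T. r1 t * t)" using hx unfolding M_def by auto
    obtain r2 where r2: "\<forall>t\<in>T. r2 t \<in> rees D" "y = (\<Sum>t\<in>T. r2 t * t)" using hy unfolding M_def by auto
    have "x + y = (\<Sum>t\<in>T. (r1 t + r2 t) * t)" by (simp add: r1 r2 sum.distrib distrib_right)
    then show ?thesis unfolding M_def using r1 r2 rees_add[OF der] by auto
  qed
  have Mmult: "y * x \<in> M" if hx: "x \<in> M" and hy: "y \<in> rees D" for x y
  proof -
    obtain r1 where r1: "\<forall>t\<in>T. r1 t \<in> rees D" "x = (\<Sum>t\<in>T. r1 t * t)" using hx unfolding M_def by auto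
    have "y * x = (\<Sum>t\<in>T. (y * r1 t) * t)" by (simp add: r1 sum_distrib_left mult.assoc)
    then show ?thesis unfolding M_def using r1 rees_mult[OF der] hy by auto
  qed
  have one: "1 \<in> rees D" using const_rees[OF der, of 1] filt_1[OF der] by (simp add: one_pCons)
  have MT: "t \<in> M" if "t \<in> T" for t
  proof -
    have "(\<Sum>t'\<in>T. (if t' = t then 1 else 0) * t') = (\<Sum>t'\<in>T. if t' = t then t' else 0)"
      by (rule sum.cong) auto
    then have "t = (\<Sum>t'\<in>T. (if t' = t then 1 else 0) * t')" using that Tfin by simp
    then show ?thesis unfolding M_def using one rees_0[OF der] by (auto intro!: exI[of _ "\<lambda>t'. if t' = t then 1 else 0"])
  qed
  have key: "x - [:coeff x 0:] \<in> M" if "x \<in> alg_gen (const_polys K) G" for x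
    using that
  proof (induction rule: alg_gen.induct)
    case (scal c)
    then show ?case using M0 by (auto simp: const_polys_def)
  next
    case (gen s)
    show ?case
    proof (cases "coeff s 0 = 0")
      case True
      then show ?thesis using gen MT T_def by (simp add: pCons_0_0)
    next
      case False
      obtain a m where s: "s = monom a m" using Ghom gen by auto
      then have "m = 0" using False by (auto simp: coeff_monom split: if_splits)
      then show ?thesis using s M0 by (simp add: monom_0)
    qed
  next
    case (add x y)
    have "x + y - [:coeff (x + y) 0:] = (x - [:coeff x 0:]) + (y - [:coeff y 0:])"
      by (simp add: algebra_simps)
    then show ?case using add Madd by metis
  next
    case (mult x y)
    have xr: "x \<in> rees D" "y \<in> rees D" using mult AR by auto
    then have cr: "[:coeff x 0:] \<in> rees D" using const_rees[OF der] unfolding rees_def by auto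
    have "x * y - [:coeff (x * y) 0:] = y * (x - [:coeff x 0:]) + [:coeff x 0:] * (y - [:coeff y 0:])"
      by (simp add: coeff_mult_0 algebra_simps)
    then show ?case using mult Madd Mmult xr cr by metis
  qed
  have "rees_plus D = M"
  proof
    show "rees_plus D \<subseteq> M"
    proof
      fix x assume "x \<in> rees_plus D"
      then have "x \<in> rees D" "coeff x 0 = 0" unfolding rees_plus_def by auto
      then show "x \<in> M" using key RG by force
    qed
    show "M \<subseteq> rees_plus D"
    proof
      fix x assume "x \<in> M"
      then obtain r where r: "\<forall>t\<in>T. r t \<in> rees D" "x = (\<Sum>t\<in>T. r t * t)" using \<open>x \<in> M\<close> unfolding M_def by auto
      have "x \<in> rees D" unfolding r(2) using r(1) GR T_def Tfin
        by (intro rees_sum[OF der] rees_mult[OF der]) auto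
      moreover have "coeff x 0 = 0" unfolding r(2) by (simp add: coeff_sum coeff_mult_0 T_def)
      ultimately show "x \<in> rees_plus D" unfolding rees_plus_def by auto
    qed
  qed
  moreover have "T \<subseteq> rees_plus D" using GR unfolding T_def rees_plus_def by auto
  ultimately show ?thesis unfolding fin_gen_module_def M_def using Tfin by blast
qed


lemma l31:
  fixes K :: "'a::comm_ring_1 set"
  assumes der: "k_derivation K D" and K0: "0 \<in> K"
    and A: "fin_gen_alg K (filt D 0)" and B: "fin_gen_module (rees D) (rees_plus D)"
  shows "fin_gen_alg (const_polys K) (rees D)"
proof -
  obtain S0 where S0: "finite S0" "S0 \<subseteq> filt D 0" "alg_gen K S0 = filt D 0"
    using A unfolding fin_gen_alg_def by blast
  obtain T where T: "finite T" "T \<subseteq> rees_plus D"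
    "rees_plus D = {\<Sum>t\<in>T. r t * t | r. \<forall>t\<in>T. r t \<in> rees D}"
    using B unfolding fin_gen_module_def by blast
  define G where "G = (\<lambda>c. [:c:]) ` S0 \<union> hcomps T"
  have Gfin: "finite G" using S0(1) finite_hcomps[OF T(1)] unfolding G_def by auto
  have TR: "T \<subseteq> rees D" using T(2) unfolding rees_plus_def by auto
  have GR: "G \<subseteq> rees D" using S0(2) TR const_rees[OF der] hcomp_rees[OF der]
    unfolding G_def hcomps_def by auto
  have c0: "[:c:] \<in> alg_gen (const_polys K) G" if "c \<in> alg_gen K S0" for c
    using that
  proof (induction rule: alg_gen.induct)
    case (scal c)
    then show ?case by (auto simp: const_polys_def intro: alg_gen.scal)
  next
    case (gen s)
    then show ?case by (auto simp: G_def intro: alg_gen.gen)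
  next
    case (add x y)
    have "[:x + y:] = [:x:] + [:y:]" by simp
    then show ?case using add by (metis alg_gen.add)
  next
    case (mult x y)
    have "[:x * y:] = [:x:] * [:y:]" by simp
    then show ?case using mult by (metis alg_gen.mult)
  qed
  have tcomp: "hcomp j t \<in> alg_gen (const_polys K) G" if "t \<in> T" "0 < j" for t j
  proof (cases "j \<le> degree t")
    case True
    then have "hcomp j t \<in> G" using that unfolding G_def hcomps_def by auto
    then show ?thesis by (rule alg_gen.gen)
  next
    case False
    then have "hcomp j t = 0" by (simp add: hcomp_def coeff_eq_0)
    then show ?thesis using zero_alg_gen[OF K0] by simp
  qed
  have hom: "\<forall>a. monom a n \<in> rees D \<longrightarrow> monom a n \<in> alg_gen (const_polys K) G" for n
  proof (induction n rule: less_induct)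
    case (less n)
    show ?case
    proof (intro allI impI)
      fix a assume a: "monom a n \<in> rees D"
      show "monom a n \<in> alg_gen (const_polys K) G"
      proof (cases n)
        case 0
        then have "a \<in> filt D 0" using monom_rees[OF der] a by auto
        then show ?thesis using c0 S0(3) 0 by (simp add: monom_0)
      next
        case (Suc m)
        then have "monom a n \<in> rees_plus D" using a by (simp add: rees_plus_def coeff_monom)
        then obtain r where r: "\<forall>t\<in>T. r t \<in> rees D" "monom a n = (\<Sum>t\<in>T. r t * t)"
          using T(3) by auto
        have "monom a n = hcomp n (monom a n)" by (simp add: hcomp_monom)
        also have "\<dots> = (\<Sum>t\<in>T. \<Sum>i\<le>n. hcomp i (r t) * hcomp (n - i) t)"
          by (simp add: r(2) hcomp_sum hcomp_mult)
        also have "\<dots> \<in> alg_gen (const_polys K) G"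
        proof (intro alg_gen_sum[OF zero_alg_gen[OF K0]] T(1) finite_atMost)
          fix t i assume t: "t \<in> T" and i: "i \<in> {..n}"
          show "hcomp i (r t) * hcomp (n - i) t \<in> alg_gen (const_polys K) G"
          proof (cases "i = n")
            case True
            have "coeff t 0 = 0" using t T(2) unfolding rees_plus_def by auto
            then have "hcomp (n - i) t = 0" using True by (simp add: hcomp_def)
            then show ?thesis using zero_alg_gen[OF K0] by simp
          next
            case False
            then have "i < n" using i by auto
            moreover have "hcomp i (r t) \<in> rees D" using hcomp_rees[OF der] r(1) t by auto
            ultimately have "hcomp i (r t) \<in> alg_gen (const_polys K) G"
              using less.IH unfolding hcomp_def by blast
            moreover have "hcomp (n - i) t \<in> alg_gen (const_polys K) G"
              using tcomp t \<open>i < n\<close> by auto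
            ultimately show ?thesis by (rule alg_gen.mult)
          qed
        qed
        finally show ?thesis .
      qed
    qed
  qed
  have "rees D \<subseteq> alg_gen (const_polys K) G"
  proof
    fix b assume b: "b \<in> rees D"
    have "(\<Sum>i\<le>degree b. hcomp i b) \<in> alg_gen (const_polys K) G"
      by (rule alg_gen_sum[OF zero_alg_gen[OF K0]]) (use hom hcomp_rees[OF der b] in \<open>auto simp: hcomp_def\<close>)
    then show "b \<in> alg_gen (const_polys K) G" using hcomp_sum_eq by metis
  qed
  moreover have "alg_gen (const_polys K) G \<subseteq> rees D" using alg_gen_rees[OF der GR] .
  ultimately show ?thesis unfolding fin_gen_alg_def using Gfin GR by blast
qed

theorem lemma2p8:
  fixes K :: "'a::idom set" and D :: "'a \<Rightarrow> 'a"
  assumes "subfield K" and "alg_closed_sub K" and "char_zero_ring TYPE('a)"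
    and "finite_type_alg K" and "normal_domain TYPE('a)"
    and "k_derivation K D" and "locally_nilpotent D"
  shows "(fin_gen_alg (const_polys K) (rees D) \<longleftrightarrow>
            fin_gen_alg_mod (const_polys K) (rees D) (gr_ideal D))
       \<and> (fin_gen_alg_mod (const_polys K) (rees D) (gr_ideal D) \<longleftrightarrow>
            (fin_gen_alg K (filt D 0) \<and> fin_gen_module (rees D) (rees_plus D)))"
proof -
  have K0: "0 \<in> K" using assms(1) unfolding subfield_def by auto
  note der = assms(6)
  show ?thesis
    using l12[OF der] l21[OF der K0] l13a[OF der K0] l13b[OF der K0] l31[OF der K0] by blast
qed

end
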